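(* Let $\eta(\omega)=\pi(\omega)/\rho(\omega)$, where $\pi$ and $\rho$ are polynomials of degrees $m$ and $n$ respectively with $n\ge m+1$, and $\rho$ has no zeros in $[0,\infty)$. Let $a_1,\dots,a_K$ be the poles of $\eta(z)$. Then there is a polynomial $P_{n-1}$ of degree at most $n-1$ such that $$\int_0^\infty\frac{\eta(\omega)}{\omega-\zeta}d\omega=\frac{P_{n-1}(\zeta)-\pi(\zeta)\log(-\zeta)}{\rho(\zeta)}$$ for all $\zeta\in\mathbb C\setminus([0,\infty)\cup\{a_k\}_{k=1}^K)$, where for $\zeta=|\zeta|e^{i\theta}$ with $0\le\theta\le2\pi$ one sets $-\zeta=|\zeta|e^{i\phi}$ with $-\pi\le\phi\le\pi$ and $\log(-\zeta)=\log|\zeta|+i\phi$. *)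

theory Defs
  imports "HOL-Analysis.Analysis" "HOL-Computational_Algebra.Polynomial"
begin

end

theory Submission
  imports Defs "HOL-Real_Asymp.Real_Asymp"
begin

lemma int_inv_sq: "((\<lambda>x::real. 1 / (1 + x)^2) has_integral 1) {0..}"
proof (intro has_integral_to_inf)
  show "(\<lambda>x::real. 1 / (1 + x)^2) integrable_on {0..y}" for y
    by (intro integrable_continuous_interval continuous_intros) auto
  have "((\<lambda>x::real. 1 / (1 + x)^2) has_integral ((- 1/(1+y)) - (- 1/(1+0)))) {0..y}" if "y \<ge> 0" for y
    using that
    by (intro fundamental_theorem_of_calculus that)
       (auto intro!: derivative_eq_intros simp: power2_eq_square field_simps
               simp flip: has_real_derivative_iff_has_vector_derivative)
  then have "\<forall>\<^sub>F y in at_top. integral {0..y} (\<lambda>x::real. 1 / (1 + x)^2) = 1 - 1/(1+y)"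
    unfolding eventually_at_top_linorder by (intro exI[of _ 0]) (auto dest!: integral_unique)
  moreover have "((\<lambda>y::real. 1 - 1/(1+y)) \<longlongrightarrow> 1) at_top"
    by real_asymp
  ultimately show "((\<lambda>y. integral {0..y} (\<lambda>x::real. 1 / (1 + x)^2)) \<longlongrightarrow> 1) at_top"
    using Lim_transform_eventually tendsto_cong by fastforce
qed auto

lemma rat_tendsto:
  fixes c b :: "complex poly"
  assumes deg: "degree c \<le> degree b" and b0: "b \<noteq> 0"
    and nz: "\<And>x::real. x > 0 \<Longrightarrow> poly b (of_real x) \<noteq> 0"
  shows "\<exists>L. ((\<lambda>x::real. poly c (of_real x) / poly b (of_real x)) \<longlongrightarrow> L) at_top"
proof -
  define \<phi> where "\<phi> = (\<lambda>u. u ^ (degree b - degree c) * poly (reflect_poly c) u / poly (reflect_poly b) u)"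
  have "isCont \<phi> 0"
    unfolding \<phi>_def using b0 by (intro continuous_intros) auto
  moreover have "((\<lambda>x::real. inverse (complex_of_real x)) \<longlongrightarrow> 0) at_top"
  proof -
    have "((\<lambda>x::real. complex_of_real (inverse x)) \<longlongrightarrow> complex_of_real 0) at_top"
      by (intro tendsto_of_real tendsto_inverse_0_at_top filterlim_ident)
    then show ?thesis by (simp add: of_real_inverse)
  qed
  ultimately have lim: "((\<lambda>x::real. \<phi> (inverse (complex_of_real x))) \<longlongrightarrow> \<phi> 0) at_top"
    by (rule isCont_tendsto_compose)
  have "\<forall>\<^sub>F x in at_top. \<phi> (inverse (complex_of_real x)) = poly c (of_real x) / poly b (of_real x)"
    unfolding eventually_at_top_linorder
  proof (intro exI[of _ 1] allI impI)
    fix x :: real assume x: "x \<ge> 1"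
    define u where "u = inverse (complex_of_real x)"
    have u0: "u \<noteq> 0" using x by (simp add: u_def)
    have iu: "inverse u = of_real x" by (simp add: u_def)
    have bx: "poly b (of_real x) \<noteq> 0" using nz x by simp
    have rc: "poly (reflect_poly c) u = u ^ degree c * poly c (of_real x)"
      using poly_reflect_poly_nz[OF u0, of c] iu by simp
    have rb: "poly (reflect_poly b) u = u ^ degree b * poly b (of_real x)"
      using poly_reflect_poly_nz[OF u0, of b] iu by simp
    have "u ^ degree b = u ^ (degree b - degree c) * u ^ degree c"
      using deg by (simp flip: power_add)
    then show "\<phi> (inverse (complex_of_real x)) = poly c (of_real x) / poly b (of_real x)"
      unfolding \<phi>_def u_def[symmetric] rc rb using u0 bx by (simp add: field_simps)
  qed
  with lim show ?thesis
    by (blast intro: Lim_transform_eventually)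
qed

lemma rat_bounded:
  fixes c b :: "complex poly"
  assumes deg: "degree c \<le> degree b"
    and nz: "\<And>x::real. x \<ge> 0 \<Longrightarrow> poly b (of_real x) \<noteq> 0"
  shows "\<exists>M. \<forall>x::real. x \<ge> 0 \<longrightarrow> norm (poly c (of_real x) / poly b (of_real x)) \<le> M"
proof -
  have b0: "b \<noteq> 0" using nz[of 0] by auto
  obtain L where L: "((\<lambda>x::real. poly c (of_real x) / poly b (of_real x)) \<longlongrightarrow> L) at_top"
    using rat_tendsto[OF deg b0] nz by force
  have "\<forall>\<^sub>F x in at_top. norm (poly c (of_real x) / poly b (of_real x)) < norm L + 1"
    using order_tendstoD(2)[OF tendsto_norm[OF L], of "norm L + 1"] by simp
  then obtain R where R: "\<And>x. x \<ge> R \<Longrightarrow> norm (poly c (of_real x) / poly b (of_real x)) < norm L + 1"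
    unfolding eventually_at_top_linorder by blast
  have "continuous_on {0..R} (\<lambda>x::real. poly c (of_real x) / poly b (of_real x))"
    using nz by (intro continuous_intros) auto
  then have "compact ((\<lambda>x::real. poly c (of_real x) / poly b (of_real x)) ` {0..R})"
    by (intro compact_continuous_image) auto
  then obtain M where M: "\<And>y. y \<in> (\<lambda>x::real. poly c (of_real x) / poly b (of_real x)) ` {0..R} \<Longrightarrow> norm y \<le> M"
    using compact_imp_bounded bounded_iff by metis
  show ?thesis
  proof (intro exI[of _ "max M (norm L + 1)"] allI impI)
    fix x :: real assume "x \<ge> 0"
    show "norm (poly c (of_real x) / poly b (of_real x)) \<le> max M (norm L + 1)"
    proof (cases "x \<le> R")
      case True then show ?thesis using M[of "poly c (of_real x) / poly b (of_real x)"] \<open>x \<ge> 0\<close> by force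
    next
      case False then show ?thesis using R[of x] by force
    qed
  qed
qed

lemma rat_integrable:
  fixes a b :: "complex poly"
  assumes deg: "degree a + 2 \<le> degree b"
    and nz: "\<And>x::real. x \<ge> 0 \<Longrightarrow> poly b (of_real x) \<noteq> 0"
  shows "(\<lambda>x::real. poly a (of_real x) / poly b (of_real x)) absolutely_integrable_on {0..}"
proof -
  define c where "c = a * [:1,1:]^2"
  have "degree c \<le> degree a + degree ([:1,1:]^2 :: complex poly)"
    unfolding c_def by (rule degree_mult_le)
  also have "degree ([:1,1:]^2 :: complex poly) \<le> 2"
    using degree_power_le[of "[:1,1:]::complex poly" 2] by simp
  finally have dc: "degree c \<le> degree b" using deg by linarith
  obtain M where M: "\<And>x::real. x \<ge> 0 \<Longrightarrow> norm (poly c (of_real x) / poly b (of_real x)) \<le> M"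
    using rat_bounded[OF dc nz] by blast
  have pc: "poly c (of_real x) = poly a (of_real x) * (1 + of_real x)^2" for x :: real
    by (simp add: c_def algebra_simps)
  have bound: "norm (poly a (of_real x) / poly b (of_real x)) \<le> M * (1 / (1 + x)^2)" if x: "x \<ge> 0" for x :: real
  proof -
    have "norm (poly a (of_real x) / poly b (of_real x)) = norm (poly c (of_real x) / poly b (of_real x)) / (1+x)^2"
    proof -
      have "norm ((1 + complex_of_real x)^2) = (1+x)^2"
        by (metis norm_of_real norm_power of_real_1 of_real_add abs_of_nonneg x add_nonneg_nonneg zero_le_one)
      then show ?thesis using x by (simp add: pc norm_mult norm_divide field_simps)
    qed
    also have "\<dots> \<le> M / (1+x)^2"
      using M[OF x] x by (intro divide_right_mono) auto
    finally show ?thesis by simp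
  qed
  show ?thesis
  proof (rule measurable_bounded_by_integrable_imp_absolutely_integrable)
    show "(\<lambda>x::real. poly a (of_real x) / poly b (of_real x)) \<in> borel_measurable (lebesgue_on {0..})"
      using nz by (intro continuous_imp_measurable_on_sets_lebesgue continuous_intros) auto
    show "(\<lambda>x. M * (1 / (1 + x)^2)) integrable_on {0::real..}"
      using has_integral_mult_right[OF int_inv_sq, of M] by (auto simp: integrable_on_def)
  qed (use bound in auto)
qed

lemma abs_int_eq:
  fixes f g :: "real \<Rightarrow> complex"
  assumes "f absolutely_integrable_on S" "\<And>x. x \<in> S \<Longrightarrow> f x = g x"
  shows "g absolutely_integrable_on S"
  using assms(1) set_integrable_cong[OF refl refl, of S f g] assms(2) by simp

lemma int_lim:
  fixes F :: "real \<Rightarrow> complex"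
  assumes F: "F absolutely_integrable_on {0..}"
  shows "(\<lambda>n. integral {0..real n} F) \<longlonglongrightarrow> integral {0..} F"
proof -
  define f where "f = (\<lambda>(k::nat) x. if x \<in> {0..real k} then F x else 0)"
  have Fi: "F integrable_on {0..}" and Fn: "(\<lambda>x. norm (F x)) integrable_on {0..}"
    using F by (auto simp: absolutely_integrable_on_def)
  have hf: "(f k has_integral integral {0..real k} F) {0..}" for k
  proof -
    have "F integrable_on {0..real k}"
      using integrable_on_subinterval[OF Fi] by auto
    then show ?thesis unfolding f_def
      by (subst has_integral_restrict) (auto simp: has_integral_integral)
  qed
  have "(\<lambda>k. integral {0..} (f k)) \<longlonglongrightarrow> integral {0..} F"
  proof (rule dominated_convergence(2)[where h = "\<lambda>x. norm (F x)"])
    show "f k integrable_on {0..}" for k using hf by blast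
    show "(\<lambda>x. norm (F x)) integrable_on {0..}" by (rule Fn)
    show "norm (f k x) \<le> norm (F x)" if "x \<in> {0..}" for k x by (auto simp: f_def)
    show "(\<lambda>k. f k x) \<longlonglongrightarrow> F x" if "x \<in> {0..}" for x
    proof -
      have "eventually (\<lambda>k. real k \<ge> x) sequentially"
        by (meson eventually_sequentiallyI nat_ceiling_le_eq)
      with that have "eventually (\<lambda>k. f k x = F x) sequentially"
        by (simp add: eventually_mono f_def)
      thus ?thesis by (simp add: tendsto_eventually)
    qed
  qed
  moreover have "integral {0..} (f k) = integral {0..real k} F" for k
    using hf by (rule integral_unique)
  ultimately show ?thesis by simp
qed

lemma has_integral_from_lim:
  fixes F :: "real \<Rightarrow> complex"
  assumes F: "F absolutely_integrable_on {0..}"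
    and L: "(\<lambda>n. integral {0..real n} F) \<longlonglongrightarrow> l"
  shows "(F has_integral l) {0..}"
proof -
  have "integral {0..} F = l" using int_lim[OF F] L LIMSEQ_unique by blast
  moreover have "F integrable_on {0..}" using F by (auto simp: absolutely_integrable_on_def)
  ultimately show ?thesis using has_integral_integral by blast
qed

lemma notin_cut:
  fixes \<zeta> :: complex
  assumes "\<zeta> \<notin> complex_of_real ` {0..}" "x \<ge> 0"
  shows "complex_of_real x - \<zeta> \<notin> \<real>\<^sub>\<le>\<^sub>0"
proof
  assume "complex_of_real x - \<zeta> \<in> \<real>\<^sub>\<le>\<^sub>0"
  then obtain t where t: "t \<le> 0" "complex_of_real x - \<zeta> = of_real t"
    by (auto elim!: nonpos_Reals_cases)
  then have "\<zeta> = of_real (x - t)" by (simp add: algebra_simps)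
  moreover have "x - t \<ge> 0" using t assms(2) by simp
  ultimately have "\<zeta> \<in> complex_of_real ` {0..}" by (intro image_eqI[of _ _ "x - t"]) auto
  then show False using assms(1) by blast
qed

lemma T1:
  fixes \<zeta> :: complex
  assumes z: "\<zeta> \<notin> complex_of_real ` {0..}"
  shows "((\<lambda>x::real. 1 / (complex_of_real x - \<zeta>) - 1 / (complex_of_real x + 1)) has_integral - Ln (- \<zeta>)) {0..}"
proof (rule has_integral_from_lim)
  have nzA: "complex_of_real x - \<zeta> \<noteq> 0" if "x \<ge> 0" for x
    using notin_cut[OF z that] by auto
  have nzB: "complex_of_real x + 1 \<noteq> 0" if "x \<ge> 0" for x
  proof -
    have "complex_of_real x + 1 = complex_of_real (x + 1)" by simp
    moreover have "x + 1 \<noteq> 0" using that by simp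
    ultimately show ?thesis by (simp only: of_real_eq_0_iff) simp
  qed
  let ?a = "[:\<zeta> + 1:] :: complex poly"
  let ?b = "[:-\<zeta>, 1:] * [:1, 1:] :: complex poly"
  have "(\<lambda>x::real. poly ?a (of_real x) / poly ?b (of_real x)) absolutely_integrable_on {0..}"
  proof (rule rat_integrable)
    show "degree ?a + 2 \<le> degree ?b" by (simp add: degree_mult_eq)
    show "poly ?b (of_real x) \<noteq> 0" if "x \<ge> 0" for x
    proof -
      have "poly ?b (of_real x) = (complex_of_real x - \<zeta>) * (complex_of_real x + 1)"
        by (simp add: algebra_simps)
      then show ?thesis using nzA[OF that] nzB[OF that] by simp
    qed
  qed
  then show "(\<lambda>x::real. 1 / (complex_of_real x - \<zeta>) - 1 / (complex_of_real x + 1)) absolutely_integrable_on {0..}"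
  proof (rule abs_int_eq)
    show "poly ?a (of_real x) / poly ?b (of_real x) = 1 / (complex_of_real x - \<zeta>) - 1 / (complex_of_real x + 1)"
      if "x \<in> {0..}" for x
      using nzA[of x] nzB[of x] that by (simp add: field_simps)
  qed
  define G where "G = (\<lambda>x::real. Ln (complex_of_real x - \<zeta>) - Ln (complex_of_real x + 1))"
  have hi: "((\<lambda>x::real. 1 / (complex_of_real x - \<zeta>) - 1 / (complex_of_real x + 1)) has_integral (G y - G 0)) {0..y}"
    if "y \<ge> 0" for y
  proof (rule fundamental_theorem_of_calculus[OF that])
    fix x assume x: "x \<in> {0..y}"
    then have x0: "x \<ge> 0" by simp
    have "x + 1 > 0" using x0 by simp
    then have pos: "complex_of_real x + 1 \<notin> \<real>\<^sub>\<le>\<^sub>0"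
      by (simp add: complex_nonpos_Reals_iff)
    have "((\<lambda>w. Ln (w - \<zeta>) - Ln (w + 1)) has_field_derivative (inverse (complex_of_real x - \<zeta>) - inverse (complex_of_real x + 1))) (at (complex_of_real x))"
      using notin_cut[OF z x0] pos
      by (auto intro!: derivative_eq_intros)
    from has_vector_derivative_real_field[OF this]
    show "(G has_vector_derivative 1 / (complex_of_real x - \<zeta>) - 1 / (complex_of_real x + 1)) (at x within {0..y})"
      by (simp add: G_def divide_inverse)
  qed
  have G0: "G 0 = Ln (- \<zeta>)" by (simp add: G_def)
  have Glim: "(G \<longlongrightarrow> 0) at_top"
  proof -
    have eq: "G y = Ln ((complex_of_real y - \<zeta>) / complex_of_real (y + 1))" if "y \<ge> 0" for y
      using Ln_divide_of_real[of "y+1" "complex_of_real y - \<zeta>"] nzA[OF that] that Ln_of_real[of "y+1"]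
      by (simp add: G_def)
    have "((\<lambda>y::real. 1 - (\<zeta> + 1) * complex_of_real (inverse (y + 1))) \<longlongrightarrow> 1 - (\<zeta> + 1) * complex_of_real 0) at_top"
    proof -
      have "filterlim (\<lambda>y::real. y + 1) at_top at_top" by real_asymp
      then show ?thesis by (intro tendsto_intros tendsto_inverse_0_at_top)
    qed
    then have "((\<lambda>y::real. 1 - (\<zeta> + 1) * complex_of_real (inverse (y + 1))) \<longlongrightarrow> 1) at_top" by simp
    moreover have "isCont Ln 1" by (intro continuous_at_Ln) auto
    ultimately have "((\<lambda>y::real. Ln (1 - (\<zeta> + 1) * complex_of_real (inverse (y + 1)))) \<longlongrightarrow> Ln 1) at_top"
      using isCont_tendsto_compose by blast
    moreover have "\<forall>\<^sub>F y in at_top. Ln (1 - (\<zeta> + 1) * complex_of_real (inverse (y + 1))) = G y"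
      unfolding eventually_at_top_linorder
    proof (intro exI[of _ 0] allI impI)
      fix y :: real assume y: "y \<ge> 0"
      have "1 - (\<zeta> + 1) * complex_of_real (inverse (y + 1)) = (complex_of_real y - \<zeta>) / complex_of_real (y + 1)"
        using nzB[OF y] y by (simp add: field_simps of_real_inverse)
      then show "Ln (1 - (\<zeta> + 1) * complex_of_real (inverse (y + 1))) = G y" using eq[OF y] by simp
    qed
    ultimately show ?thesis by (simp add: Lim_transform_eventually)
  qed
  have "(\<lambda>n. G (real n) - G 0) \<longlonglongrightarrow> 0 - Ln (- \<zeta>)"
    unfolding G0 by (intro tendsto_intros filterlim_compose[OF Glim filterlim_real_sequentially])
  moreover have "integral {0..real n} (\<lambda>x::real. 1 / (complex_of_real x - \<zeta>) - 1 / (complex_of_real x + 1)) = G (real n) - G 0" for n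
    using hi[of "real n"] by (simp add: integral_unique)
  ultimately show "(\<lambda>n. integral {0..real n} (\<lambda>x::real. 1 / (complex_of_real x - \<zeta>) - 1 / (complex_of_real x + 1))) \<longlonglongrightarrow> - Ln (- \<zeta>)"
    by simp
qed


definition Nk :: "complex poly \<Rightarrow> complex poly \<Rightarrow> nat \<Rightarrow> complex poly" where
  "Nk p r k = smult (coeff p k) r - smult (coeff r k) p"

definition sj :: "complex poly \<Rightarrow> complex poly \<Rightarrow> nat \<Rightarrow> complex poly" where
  "sj p r j = (\<Sum>k\<le>degree r. if j < k then Nk p r k * monom 1 (k - Suc j) else 0)"

lemma poly_altdef_le:
  fixes p :: "complex poly"
  assumes "degree p \<le> n"
  shows "poly p w = (\<Sum>k\<le>n. coeff p k * w ^ k)"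
proof -
  have "poly p w = (\<Sum>k\<le>degree p. coeff p k * w ^ k)" by (rule poly_altdef)
  also have "\<dots> = (\<Sum>k\<le>n. coeff p k * w ^ k)"
    by (rule sum.mono_neutral_left) (use assms in \<open>auto simp: coeff_eq_0\<close>)
  finally show ?thesis .
qed

lemma sumN:
  fixes p r :: "complex poly"
  assumes "degree p \<le> n" "degree r \<le> n"
  shows "(\<Sum>k\<le>n. poly (Nk p r k) z * w ^ k) = poly r z * poly p w - poly p z * poly r w"
proof -
  have "(\<Sum>k\<le>n. poly (Nk p r k) z * w ^ k) =
        poly r z * (\<Sum>k\<le>n. coeff p k * w ^ k) - poly p z * (\<Sum>k\<le>n. coeff r k * w ^ k)"
    by (simp add: Nk_def sum_distrib_left sum_subtractf algebra_simps)
  also have "\<dots> = poly r z * poly p w - poly p z * poly r w"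
    using poly_altdef_le[OF assms(1)] poly_altdef_le[OF assms(2)] by simp
  finally show ?thesis .
qed

lemma E1:
  fixes p r :: "complex poly"
  assumes "degree p < degree r"
  shows "poly r z * poly p w - poly p z * poly r w =
         (w - z) * (\<Sum>j<degree r. poly (sj p r j) z * w ^ j)"
proof -
  define n where "n = degree r"
  have "(\<Sum>j<n. poly (sj p r j) z * w ^ j) =
        (\<Sum>j<n. \<Sum>k\<le>n. if j < k then poly (Nk p r k) z * (z ^ (k - Suc j) * w ^ j) else 0)"
    by (simp add: sj_def n_def poly_sum poly_monom sum_distrib_right if_distrib if_distribR mult.assoc cong: if_cong)
  also have "\<dots> = (\<Sum>k\<le>n. \<Sum>j<n. if j < k then poly (Nk p r k) z * (z ^ (k - Suc j) * w ^ j) else 0)"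
    by (rule sum.swap)
  also have "\<dots> = (\<Sum>k\<le>n. poly (Nk p r k) z * (\<Sum>j<k. z ^ (k - Suc j) * w ^ j))"
  proof (rule sum.cong[OF refl])
    fix k assume k: "k \<in> {..n}"
    have "(\<Sum>j<n. if j < k then poly (Nk p r k) z * (z ^ (k - Suc j) * w ^ j) else 0) =
          (\<Sum>j\<in>{j\<in>{..<n}. j < k}. poly (Nk p r k) z * (z ^ (k - Suc j) * w ^ j))"
      by (rule sum.inter_filter[symmetric]) simp
    also have "{j\<in>{..<n}. j < k} = {..<k}"
      using k by auto
    finally show "(\<Sum>j<n. if j < k then poly (Nk p r k) z * (z ^ (k - Suc j) * w ^ j) else 0) =
          poly (Nk p r k) z * (\<Sum>j<k. z ^ (k - Suc j) * w ^ j)"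
      by (simp add: sum_distrib_left)
  qed
  finally have "(w - z) * (\<Sum>j<n. poly (sj p r j) z * w ^ j) =
       (\<Sum>k\<le>n. poly (Nk p r k) z * ((w - z) * (\<Sum>j<k. z ^ (k - Suc j) * w ^ j)))"
    by (simp add: sum_distrib_left algebra_simps)
  also have "\<dots> = (\<Sum>k\<le>n. poly (Nk p r k) z * (w ^ k - z ^ k))"
    by (simp add: power_diff_sumr2)
  also have "\<dots> = (\<Sum>k\<le>n. poly (Nk p r k) z * w ^ k) - (\<Sum>k\<le>n. poly (Nk p r k) z * z ^ k)"
    by (simp add: algebra_simps sum_subtractf)
  also have "\<dots> = poly r z * poly p w - poly p z * poly r w"
    using sumN[of p n r z w] sumN[of p n r z z] assms by (simp add: n_def)
  finally show ?thesis by (simp add: n_def)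
qed

lemma degree_Nk:
  assumes "degree p \<le> n" "degree r \<le> n"
  shows "degree (Nk p r k) \<le> n"
  unfolding Nk_def
  by (intro degree_diff_le order.trans[OF degree_smult_le] assms)

lemma E2:
  fixes p r :: "complex poly"
  assumes dp: "degree p < degree r" and j: "j < degree r"
  shows "degree (sj p r j) \<le> degree r - 1"
proof -
  define n where "n = degree r"
  have id: "monom 1 (Suc j) * sj p r j = - (\<Sum>k\<le>j. Nk p r k * monom 1 k)"
  proof (rule poly_eq_poly_eq_iff[THEN iffD1], rule ext)
    fix z :: complex
    define f where "f = (\<lambda>k. poly (Nk p r k) z * z ^ k)"
    have "poly (monom 1 (Suc j) * sj p r j) z =
          (\<Sum>k\<le>n. if j < k then poly (Nk p r k) z * (z ^ Suc j * z ^ (k - Suc j)) else 0)"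
      by (simp add: sj_def n_def poly_sum poly_monom sum_distrib_left if_distrib if_distribR mult.assoc mult.left_commute cong: if_cong)
    also have "\<dots> = (\<Sum>k\<le>n. if j < k then f k else 0)"
    proof (rule sum.cong[OF refl])
      fix k assume "k \<in> {..n}"
      have "z ^ Suc j * z ^ (k - Suc j) = z ^ k" if "j < k"
        using that by (metis power_add Suc_leI le_add_diff_inverse)
      then show "(if j < k then poly (Nk p r k) z * (z ^ Suc j * z ^ (k - Suc j)) else 0) = (if j < k then f k else 0)"
        by (simp add: f_def)
    qed
    also have "\<dots> = (\<Sum>k\<le>n. f k) - (\<Sum>k\<le>n. if j < k then 0 else f k)"
      by (simp add: sum_subtractf[symmetric] algebra_simps) (rule sum.cong, auto)
    also have "(\<Sum>k\<le>n. f k) = 0"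
      using sumN[of p n r z z] dp by (simp add: f_def n_def)
    also have "(\<Sum>k\<le>n. if j < k then 0 else f k) = (\<Sum>k\<le>n. if \<not> j < k then f k else 0)"
      by (rule sum.cong) auto
    also have "\<dots> = (\<Sum>k\<in>{k\<in>{..n}. \<not> j < k}. f k)"
      by (rule sum.inter_filter[symmetric]) simp
    also have "{k\<in>{..n}. \<not> j < k} = {..j}" using j by (auto simp: n_def)
    finally show "poly (monom 1 (Suc j) * sj p r j) z = poly (- (\<Sum>k\<le>j. Nk p r k * monom 1 k)) z"
      by (simp add: f_def poly_sum poly_monom)
  qed
  show ?thesis
  proof (cases "sj p r j = 0")
    case True then show ?thesis by simp
  next
    case False
    have "Suc j + degree (sj p r j) = degree (monom 1 (Suc j) * sj p r j)"
      using False by (simp add: degree_mult_eq degree_monom_eq)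
    also have "\<dots> \<le> n + j"
      unfolding id degree_minus
    proof (rule degree_sum_le)
      fix k assume "k \<in> {..j}"
      then have "k \<le> j" by simp
      have "degree (Nk p r k * monom 1 k) \<le> degree (Nk p r k) + degree (monom (1::complex) k)"
        by (rule degree_mult_le)
      also have "\<dots> \<le> n + k"
        using degree_Nk[of p n r k] dp by (simp add: n_def degree_monom_eq)
      finally show "degree (Nk p r k * monom 1 k) \<le> n + j" using \<open>k \<le> j\<close> by simp
    qed simp
    finally show ?thesis by (simp add: n_def)
  qed
qed

lemma E3:
  fixes p r :: "complex poly"
  assumes dp: "degree p < degree r"
  shows "poly (sj p r (degree r - 1)) z = - lead_coeff r * poly p z"
proof -
  define n where "n = degree r"
  have n1: "n \<ge> 1" using dp by (simp add: n_def)
  have "sj p r (n - 1) = (\<Sum>k\<le>n. if k = n then Nk p r k * monom 1 (k - Suc (n - 1)) else 0)"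
    unfolding sj_def n_def[symmetric]
    by (rule sum.cong[OF refl]) (use n1 in auto)
  also have "\<dots> = Nk p r n"
    using n1 by simp
  finally show ?thesis
    using dp coeff_eq_0[of p n] by (simp add: n_def Nk_def)
qed


theorem lemma8:
  fixes p r :: "complex poly"
  assumes deg: "degree r \<ge> degree p + 1"
    and nozero: "\<forall>x::real. x \<ge> 0 \<longrightarrow> poly r (complex_of_real x) \<noteq> 0"
  shows "\<exists>P :: complex poly. degree P \<le> degree r - 1 \<and>
    (\<forall>\<zeta>. \<zeta> \<notin> complex_of_real ` {0..} \<and> poly r \<zeta> \<noteq> 0 \<longrightarrow>
      ((\<lambda>\<omega>::real. (poly p (complex_of_real \<omega>) / poly r (complex_of_real \<omega>))
                    / (complex_of_real \<omega> - \<zeta>))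
        has_integral ((poly P \<zeta> - poly p \<zeta> * Ln (- \<zeta>)) / poly r \<zeta>)) {0..})"
proof -
  define n where "n = degree r"
  have dp: "degree p < degree r" using deg by simp
  have n1: "n \<ge> 1" using deg by (simp add: n_def)
  have r0: "r \<noteq> 0" using n1 by (auto simp: n_def)
  define lc where "lc = lead_coeff r"
  have nzr: "\<And>x::real. x \<ge> 0 \<Longrightarrow> poly r (complex_of_real x) \<noteq> 0" using nozero by blast
  have nzB: "complex_of_real x + 1 \<noteq> 0" if "x \<ge> 0" for x
  proof -
    have "complex_of_real x + 1 = complex_of_real (x + 1)" by simp
    moreover have "x + 1 \<noteq> 0" using that by simp
    ultimately show ?thesis by (simp only: of_real_eq_0_iff) simp
  qed
  define T2f where "T2f = (\<lambda>x::real. 1 / (complex_of_real x + 1) - lc * complex_of_real x ^ (n - 1) / poly r (complex_of_real x))"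
  define a2 where "a2 = r - monom lc n - monom lc (n - 1)"
  define b2 where "b2 = [:1, 1:] * r"
  have T2i: "T2f absolutely_integrable_on {0..}"
  proof -
    have "(\<lambda>x::real. poly a2 (of_real x) / poly b2 (of_real x)) absolutely_integrable_on {0..}"
    proof (rule rat_integrable)
      have "degree a2 \<le> n - 1"
      proof (rule degree_le, intro allI impI)
        fix i assume i: "n - 1 < i"
        show "coeff a2 i = 0"
        proof (cases "i = n")
          case True then show ?thesis using n1 by (simp add: a2_def coeff_monom lc_def n_def)
        next
          case False then have "i > n" using i by simp
          then show ?thesis by (simp add: a2_def coeff_monom coeff_eq_0 n_def)
        qed
      qed
      moreover have "degree b2 = n + 1" unfolding b2_def
        by (subst degree_mult_eq) (use r0 in \<open>auto simp: n_def\<close>)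
      ultimately show "degree a2 + 2 \<le> degree b2" using n1 by simp
      show "poly b2 (of_real x) \<noteq> 0" if "x \<ge> 0" for x
      proof -
        have "poly b2 (of_real x) = (complex_of_real x + 1) * poly r (of_real x)"
          by (simp add: b2_def algebra_simps)
        then show ?thesis using nzr[OF that] nzB[OF that] by simp
      qed
    qed
    then show ?thesis
    proof (rule abs_int_eq)
      fix x :: real assume "x \<in> {0..}"
      then have x: "x \<ge> 0" by simp
      have pa: "poly a2 (of_real x) = poly r (of_real x) - lc * (complex_of_real x ^ (n - 1) * (complex_of_real x + 1))"
      proof -
        have "complex_of_real x ^ n = complex_of_real x ^ (n - 1) * complex_of_real x"
          using n1 by (metis Suc_diff_le diff_Suc_1 power_Suc2)
        then show ?thesis by (simp add: a2_def poly_monom algebra_simps)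
      qed
      show "poly a2 (of_real x) / poly b2 (of_real x) = T2f x"
        using nzr[OF x] nzB[OF x] unfolding T2f_def pa
        by (simp add: b2_def field_simps)
    qed
  qed
  define C where "C = integral {0..} T2f"
  have T2: "(T2f has_integral C) {0..}"
    using T2i by (simp add: C_def absolutely_integrable_on_def has_integral_integral)
  have T3i: "(\<lambda>x::real. complex_of_real x ^ j / poly r (complex_of_real x)) absolutely_integrable_on {0..}"
    if "j < n - 1" for j
  proof -
    have "(\<lambda>x::real. poly (monom 1 j) (of_real x) / poly r (of_real x)) absolutely_integrable_on {0..}"
      by (rule rat_integrable) (use that nzr in \<open>auto simp: degree_monom_eq n_def\<close>)
    then show ?thesis by (simp add: poly_monom)
  qed
  define c where "c = (\<lambda>j. integral {0..} (\<lambda>x::real. complex_of_real x ^ j / poly r (complex_of_real x)))"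
  have T3: "((\<lambda>x::real. complex_of_real x ^ j / poly r (complex_of_real x)) has_integral c j) {0..}"
    if "j < n - 1" for j
    using T3i[OF that] by (simp add: c_def absolutely_integrable_on_def has_integral_integral)
  define P where "P = smult C p + (\<Sum>j<n - 1. smult (c j) (sj p r j))"
  show ?thesis
  proof (intro exI[of _ P] conjI allI impI)
    show "degree P \<le> degree r - 1"
      unfolding P_def
    proof (intro degree_add_le degree_sum_le)
      show "degree (smult C p) \<le> degree r - 1"
        using dp by (intro order.trans[OF degree_smult_le]) simp
      fix j assume "j \<in> {..<n - 1}"
      then have "j < degree r" by (simp add: n_def)
      then show "degree (smult (c j) (sj p r j)) \<le> degree r - 1"
        by (intro order.trans[OF degree_smult_le] E2 dp)
    qed simp
  next
    fix \<zeta> :: complex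
    assume z: "\<zeta> \<notin> complex_of_real ` {0..} \<and> poly r \<zeta> \<noteq> 0"
    then have zc: "\<zeta> \<notin> complex_of_real ` {0..}" and rz: "poly r \<zeta> \<noteq> 0" by auto
    define G where "G = (\<lambda>x::real. (1 / poly r \<zeta>) *
       (poly p \<zeta> * (1 / (complex_of_real x - \<zeta>) - 1 / (complex_of_real x + 1)) + poly p \<zeta> * T2f x +
        (\<Sum>j<n - 1. poly (sj p r j) \<zeta> * (complex_of_real x ^ j / poly r (complex_of_real x)))))"
    have hG: "(G has_integral ((1 / poly r \<zeta>) * (poly p \<zeta> * (- Ln (- \<zeta>)) + poly p \<zeta> * C +
        (\<Sum>j<n - 1. poly (sj p r j) \<zeta> * c j)))) {0..}"
      unfolding G_def
      by (intro has_integral_mult_right has_integral_add has_integral_sum T1 zc T2 T3) auto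
    have val: "(1 / poly r \<zeta>) * (poly p \<zeta> * (- Ln (- \<zeta>)) + poly p \<zeta> * C +
        (\<Sum>j<n - 1. poly (sj p r j) \<zeta> * c j)) = (poly P \<zeta> - poly p \<zeta> * Ln (- \<zeta>)) / poly r \<zeta>"
        by (simp add: P_def poly_sum field_simps)
    have hG': "(G has_integral ((poly P \<zeta> - poly p \<zeta> * Ln (- \<zeta>)) / poly r \<zeta>)) {0..}"
      using hG unfolding val .
    show "((\<lambda>\<omega>::real. (poly p (complex_of_real \<omega>) / poly r (complex_of_real \<omega>))
                    / (complex_of_real \<omega> - \<zeta>))
        has_integral ((poly P \<zeta> - poly p \<zeta> * Ln (- \<zeta>)) / poly r \<zeta>)) {0..}"
    proof (rule has_integral_eq[OF _ hG'])
      fix x :: real assume "x \<in> {0..}"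
      then have x: "x \<ge> 0" by simp
      define w where "w = complex_of_real x"
      have wz: "w - \<zeta> \<noteq> 0" using notin_cut[OF zc x] by (auto simp: w_def)
      have w1: "w + 1 \<noteq> 0" using nzB[OF x] by (simp add: w_def)
      have rw: "poly r w \<noteq> 0" using nzr[OF x] by (simp add: w_def)
      define S' where "S' = (\<Sum>j<n - 1. poly (sj p r j) \<zeta> * w ^ j)"
      have "poly r \<zeta> * poly p w - poly p \<zeta> * poly r w = (w - \<zeta>) * (\<Sum>j<n. poly (sj p r j) \<zeta> * w ^ j)"
        using E1[OF dp, of \<zeta> w] by (simp add: n_def)
      also have "(\<Sum>j<n. poly (sj p r j) \<zeta> * w ^ j) = S' - lc * poly p \<zeta> * w ^ (n - 1)"
      proof -
        obtain m where m: "n = Suc m" using n1 by (cases n) auto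
        have "(\<Sum>j<n. poly (sj p r j) \<zeta> * w ^ j) = S' + poly (sj p r (n - 1)) \<zeta> * w ^ (n - 1)"
          unfolding S'_def m by simp
        then show ?thesis using E3[OF dp, of \<zeta>] by (simp add: n_def lc_def)
      qed
      finally have key: "poly r \<zeta> * poly p w - poly p \<zeta> * poly r w = (w - \<zeta>) * (S' - lc * poly p \<zeta> * w ^ (n - 1))" .
      have sumeq: "(\<Sum>j<n - 1. poly (sj p r j) \<zeta> * (w ^ j / poly r w)) = S' / poly r w"
        by (simp add: S'_def sum_divide_distrib)
      have "G x = (1 / poly r \<zeta>) * (poly p \<zeta> * (1 / (w - \<zeta>) - 1 / (w + 1)) + poly p \<zeta> * (1 / (w + 1) - lc * w ^ (n - 1) / poly r w) + S' / poly r w)"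
        unfolding G_def T2f_def w_def[symmetric] sumeq ..
      also have "\<dots> = (1 / poly r \<zeta>) * (poly p \<zeta> / (w - \<zeta>) + (S' - lc * poly p \<zeta> * w ^ (n - 1)) / poly r w)"
        by (simp add: algebra_simps diff_divide_distrib)
      also have "\<dots> = (poly p \<zeta> * poly r w + (w - \<zeta>) * (S' - lc * poly p \<zeta> * w ^ (n - 1))) / (poly r \<zeta> * poly r w * (w - \<zeta>))"
        using wz rw rz by (simp add: field_simps)
      also have "\<dots> = (poly r \<zeta> * poly p w) / (poly r \<zeta> * poly r w * (w - \<zeta>))"
        using key by (simp add: algebra_simps)
      also have "\<dots> = poly p w / poly r w / (w - \<zeta>)"
        using rz by simp
      finally show "G x = poly p (complex_of_real x) / poly r (complex_of_real x) / (complex_of_real x - \<zeta>)"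
        by (simp add: w_def)
    qed
  qed
qed

end
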